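(* Let $\langle A_\alpha:\alpha<\mathfrak{p}\rangle$ be a tower. Let $X$ be the space on $(\omega\times\mathfrak{p})\cup\{\infty\}$ in which all points of $\omega\times\mathfrak{p}$ are isolated and a local subbase at $\infty$ consists of the sets $X\setminus(\{n\}\times\mathfrak{p})$ for $n<\omega$; $X\setminus(A_\alpha\times\alpha)$ for $\alpha<\mathfrak{p}$; and $X\setminus(B\times\alpha)$ where $\alpha<\mathfrak{p}$ has $\mathrm{cf}(\alpha)>\omega$ and $B$ is a pseudo-intersection of $\{A_\beta:\beta<\alpha\}$. Then $X$ is CFC, Fréchet, and not $L$-selective.
   Context: $\mathfrak{p}$ is the pseudo-intersection number. A pseudo-intersection of a family of subsets of $\omega$ is a set $B\subseteq\omega$ with $B\subseteq^*A$ (inclusion modulo finite) for every $A$ in the family. A tower of length $\kappa$ is a sequence $\langle A_\alpha:\alpha<\kappa\rangle$ of infinite subsets of $\omega$ with $A_\beta\subseteq^*A_\alpha$ for $\alpha<\beta$ and no infinite pseudo-intersection. A space is CFC if every countable subspace is first countable; it is Fréchet if whenever $x\in\overline{A}$ some sequence in $A$ converges to $x$. $\mathcal{F}(X)$ is the set of nonempty closed subsets of $X$; $\varphi:Y\rightarrow\mathcal{F}(X)$ is lower semicontinuous if for every open $W\subseteq X$, $\{y:\varphi(y)\cap W\neq\emptyset\}$ is open. $X$ is $L$-selective if every lower semicontinuous $\varphi:\omega+1\rightarrow\mathcal{F}(X)$ ($\omega+1$ with the order topology) has a continuous selection $s$ with $s(y)\in\varphi(y)$ for all $y$. *)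

theory Defs
  imports "HOL-Analysis.Analysis"
begin

definition sfip :: "nat set set \<Rightarrow> bool" where
  "sfip F \<longleftrightarrow> (\<forall>G. G \<subseteq> F \<and> finite G \<longrightarrow> infinite (\<Inter>G))"

definition pseudo_int :: "nat set \<Rightarrow> nat set set \<Rightarrow> bool" where
  "pseudo_int B F \<longleftrightarrow> (\<forall>A\<in>F. finite (B - A))"

(* The well-order r on UNIV :: 'k set is (isomorphic to) the initial ordinal p,
   the pseudo-intersection number: the least cardinality of a family of
   subsets of omega with the SFIP and no infinite pseudo-intersection. *)
definition is_p_ordinal :: "'k rel \<Rightarrow> bool" where
  "is_p_ordinal r \<longleftrightarrow> card_order r \<and>
     (\<forall>F. sfip F \<and> \<not> (\<exists>B. infinite B \<and> pseudo_int B F) \<longrightarrow> (card_of (UNIV :: 'k set), card_of F) \<in> ordLeq) \<and>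
     (\<exists>F. sfip F \<and> \<not> (\<exists>B. infinite B \<and> pseudo_int B F) \<and> (card_of F, card_of (UNIV :: 'k set)) \<in> ordIso)"

definition lt :: "'k rel \<Rightarrow> 'k \<Rightarrow> 'k \<Rightarrow> bool" where
  "lt r \<beta> \<alpha> \<longleftrightarrow> (\<beta>, \<alpha>) \<in> r \<and> \<beta> \<noteq> \<alpha>"

definition cf_gt_omega :: "'k rel \<Rightarrow> 'k \<Rightarrow> bool" where
  "cf_gt_omega r \<alpha> \<longleftrightarrow> {\<beta>. lt r \<beta> \<alpha>} \<noteq> {} \<and>
     (\<forall>C. C \<subseteq> {\<beta>. lt r \<beta> \<alpha>} \<and> countable C \<longrightarrow>
        (\<exists>\<gamma>. lt r \<gamma> \<alpha> \<and> (\<forall>\<beta>\<in>C. lt r \<beta> \<gamma>)))"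

definition tower :: "'k rel \<Rightarrow> ('k \<Rightarrow> nat set) \<Rightarrow> bool" where
  "tower r A \<longleftrightarrow> (\<forall>\<alpha>. infinite (A \<alpha>)) \<and>
     (\<forall>\<alpha> \<beta>. lt r \<alpha> \<beta> \<longrightarrow> finite (A \<beta> - A \<alpha>)) \<and>
     \<not> (\<exists>B. infinite B \<and> pseudo_int B (range A))"

(* The space X on (omega \<times> p) \<union> {\<infinity>}; None plays the role of \<infinity>.
   Points Some p are isolated; the listed sets form a local subbase at \<infinity>. *)
definition tower_space :: "'k rel \<Rightarrow> ('k \<Rightarrow> nat set) \<Rightarrow> (nat \<times> 'k) option topology" where
  "tower_space r A = topology_generated_by
     ({{Some p} | p. True}
      \<union> {- (Some ` ({n} \<times> UNIV)) | n. True}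
      \<union> {- (Some ` (A \<alpha> \<times> {\<beta>. lt r \<beta> \<alpha>})) | \<alpha>. True}
      \<union> {- (Some ` (B \<times> {\<beta>. lt r \<beta> \<alpha>})) | \<alpha> B.
            cf_gt_omega r \<alpha> \<and> pseudo_int B (A ` {\<beta>. lt r \<beta> \<alpha>})})"

definition CFC :: "'a topology \<Rightarrow> bool" where
  "CFC X \<longleftrightarrow> (\<forall>S. S \<subseteq> topspace X \<and> countable S \<longrightarrow> first_countable (subtopology X S))"

definition frechet_space :: "'a topology \<Rightarrow> bool" where
  "frechet_space X \<longleftrightarrow> (\<forall>A x. A \<subseteq> topspace X \<and> x \<in> X closure_of A \<longrightarrow>
     (\<exists>\<sigma>. (\<forall>n. \<sigma> n \<in> A) \<and> limitin X \<sigma> x sequentially))"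

definition lsc_closed :: "'b topology \<Rightarrow> 'a topology \<Rightarrow> ('b \<Rightarrow> 'a set) \<Rightarrow> bool" where
  "lsc_closed Y X \<phi> \<longleftrightarrow>
     (\<forall>y\<in>topspace Y. closedin X (\<phi> y) \<and> \<phi> y \<noteq> {}) \<and>
     (\<forall>W. openin X W \<longrightarrow> openin Y {y \<in> topspace Y. \<phi> y \<inter> W \<noteq> {}})"

(* L-selective; omega+1 with the order topology is enat with its order topology *)
definition L_selective :: "'a topology \<Rightarrow> bool" where
  "L_selective X \<longleftrightarrow> (\<forall>\<phi>. lsc_closed (euclidean :: enat topology) X \<phi> \<longrightarrow>
     (\<exists>s. continuous_map (euclidean :: enat topology) X s \<and> (\<forall>y. s y \<in> \<phi> y)))"

end

theory Submission
  imports Defs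
begin


context
  fixes r :: "'k rel"
  assumes W: "well_order_on UNIV r"
begin

lemma Field_r: "Field r = UNIV"
  using well_order_on_Field[OF W] by simp

lemma wo_rel_r: "wo_rel r"
  using W Field_r by (simp add: wo_rel_def)

lemma wo_refl: "(a,a) \<in> r"
  using W unfolding well_order_on_def linear_order_on_def partial_order_on_def preorder_on_def refl_on_def by auto

lemma wo_total: "(a,b) \<in> r \<or> (b,a) \<in> r"
  using W wo_refl unfolding well_order_on_def linear_order_on_def total_on_def by (cases "a = b") auto

lemma wo_antisym: "(a,b) \<in> r \<Longrightarrow> (b,a) \<in> r \<Longrightarrow> a = b"
  using W unfolding well_order_on_def linear_order_on_def partial_order_on_def antisym_def by auto

lemma wo_trans: "(a,b) \<in> r \<Longrightarrow> (b,c) \<in> r \<Longrightarrow> (a,c) \<in> r"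
  using W unfolding well_order_on_def linear_order_on_def partial_order_on_def preorder_on_def trans_def by blast

lemma wo_min: "X \<noteq> {} \<Longrightarrow> \<exists>m\<in>X. \<forall>x\<in>X. (m,x) \<in> r"
proof -
  assume "X \<noteq> {}"
  have F: "Field r = UNIV" by (rule Field_r)
  show ?thesis
    using wo_rel.minim_in[OF wo_rel_r, of X] wo_rel.minim_least[OF wo_rel_r, of X] \<open>X \<noteq> {}\<close> F
    by auto
qed

lemma not_lt: "\<not> lt r a b \<longleftrightarrow> (b,a) \<in> r"
  unfolding lt_def using wo_total wo_antisym wo_refl by blast

lemma lt_trans: "lt r a b \<Longrightarrow> lt r b c \<Longrightarrow> lt r a c"
  unfolding lt_def using wo_trans wo_antisym by blast

lemma lt_le_trans: "lt r a b \<Longrightarrow> (b,c) \<in> r \<Longrightarrow> lt r a c"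
  unfolding lt_def using wo_trans wo_antisym by blast

lemma le_lt_trans: "(a,b) \<in> r \<Longrightarrow> lt r b c \<Longrightarrow> lt r a c"
  unfolding lt_def using wo_trans wo_antisym by blast

lemma lt_irrefl: "\<not> lt r a a"
  unfolding lt_def by simp

lemma lt_cases: "lt r a b \<or> a = b \<or> lt r b a"
  unfolding lt_def using wo_total by blast

lemma finite_upper:
  fixes e :: "nat \<Rightarrow> 'k"
  shows "\<exists>M. M \<in> e ` {..n} \<and> (\<forall>i\<le>n. (e i, M) \<in> r)"
proof (induction n)
  case 0
  then show ?case using wo_refl by auto
next
  case (Suc n)
  then obtain M where M: "M \<in> e ` {..n}" "\<forall>i\<le>n. (e i, M) \<in> r" by blast
  show ?case
  proof (cases "(M, e (Suc n)) \<in> r")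
    case True
    then show ?thesis using M wo_trans wo_refl le_Suc_eq by (metis atMost_iff image_eqI order_refl)
  next
    case False
    then have "(e (Suc n), M) \<in> r" using wo_total by blast
    then show ?thesis using M le_Suc_eq by (auto)
  qed
qed

end

lemma inc_choice:
  fixes Q :: "nat \<Rightarrow> nat set"
  assumes "\<And>m. infinite (Q m)"
  shows "\<exists>k. strict_mono k \<and> (\<forall>m. k m \<in> Q m)"
proof -
  have ex: "\<exists>x. x \<in> Q m \<and> x > y" for m y
    using assms[of m] unfolding infinite_nat_iff_unbounded by blast
  define k where "k = rec_nat (LEAST x. x \<in> Q 0) (\<lambda>n kn. LEAST x. x \<in> Q (Suc n) \<and> x > kn)"
  have k0: "k 0 = (LEAST x. x \<in> Q 0)" and kS: "k (Suc n) = (LEAST x. x \<in> Q (Suc n) \<and> x > k n)" for n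
    by (simp_all add: k_def)
  have "k 0 \<in> Q 0" unfolding k0 using ex[of 0 0] by (metis LeastI)
  moreover have "k (Suc n) \<in> Q (Suc n) \<and> k (Suc n) > k n" for n
    unfolding kS using ex[of "Suc n" "k n"] by (rule LeastI_ex)
  ultimately have "\<forall>m. k m \<in> Q m" and "\<And>n. k n < k (Suc n)"
    by (metis not0_implies_Suc, blast)
  then show ?thesis by (metis strict_mono_Suc_iff)
qed

context
  fixes r :: "'k rel" and A :: "'k \<Rightarrow> nat set"
  assumes W: "well_order_on UNIV r" and T: "tower r A"
begin

lemma A_inf: "infinite (A a)"
  using T unfolding tower_def by blast

lemma tower_le: "(a,b) \<in> r \<Longrightarrow> finite (A b - A a)"
  using T unfolding tower_def lt_def by (cases "a = b") auto

lemma countable_bound: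
  assumes "countable C"
  shows "\<exists>\<delta>. \<forall>c\<in>C. lt r c \<delta>"
proof (rule ccontr)
  assume "\<not> ?thesis"
  then have cof: "\<forall>\<delta>. \<exists>c\<in>C. (\<delta>, c) \<in> r" using not_lt[OF W] by blast
  then have "C \<noteq> {}" by blast
  define e where "e = from_nat_into C"
  have Ce: "range e = C" using range_from_nat_into[OF \<open>C \<noteq> {}\<close> assms] e_def by simp
  define E where "E n = (\<Inter>i\<in>{..n}. A (e i))" for n
  have Einf: "infinite (E n)" for n
  proof -
    obtain M where M: "\<forall>i\<le>n. (e i, M) \<in> r" using finite_upper[OF W, of e n] by blast
    have "A M \<subseteq> E n \<union> (\<Union>i\<in>{..n}. A M - A (e i))" unfolding E_def by auto
    moreover have "\<forall>i\<in>{..n}. finite (A M - A (e i))" using M tower_le by auto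
    then have "finite (\<Union>i\<in>{..n}. A M - A (e i))" by (intro finite_UN_I) auto
    ultimately show ?thesis using A_inf[of M] by (meson finite_Un finite_subset)
  qed
  obtain k where k: "strict_mono k" "\<forall>m. k m \<in> E m" using inc_choice[of E] Einf by blast
  have Binf: "infinite (range k)" using k(1) strict_mono_imp_inj_on range_inj_infinite by blast
  have "pseudo_int (range k) (range A)"
    unfolding pseudo_int_def
  proof
    fix X assume "X \<in> range A"
    then obtain a where a: "X = A a" by blast
    obtain c where c: "c \<in> C" "(a, c) \<in> r" using cof by blast
    obtain i where i: "c = e i" using Ce c(1) by blast
    have "range k - A c \<subseteq> k ` {..<i}"
    proof
      fix x assume "x \<in> range k - A c"
      then obtain m where m: "x = k m" "k m \<notin> A c" by blast
      have "m < i"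
      proof (rule ccontr)
        assume "\<not> m < i"
        then have "k m \<in> A (e i)" using k(2) unfolding E_def by auto
        then show False using m i by simp
      qed
      then show "x \<in> k ` {..<i}" using m by blast
    qed
    then have "finite (range k - A c)" using finite_subset by blast
    moreover have "finite (A c - A a)" using tower_le c(2) by blast
    moreover have "range k - A a \<subseteq> (range k - A c) \<union> (A c - A a)" by blast
    ultimately show "finite (range k - X)" using a by (meson finite_UnI finite_subset)
  qed
  then show False using T Binf unfolding tower_def by blast
qed

end


definition comps :: "'k rel \<Rightarrow> ('k \<Rightarrow> nat set) \<Rightarrow> (nat \<times> 'k) set set" where
  "comps r A = {{n} \<times> UNIV | n. True} \<union> {A \<alpha> \<times> {\<beta>. lt r \<beta> \<alpha>} | \<alpha>. True}
     \<union> {B \<times> {\<beta>. lt r \<beta> \<alpha>} | \<alpha> B. cf_gt_omega r \<alpha> \<and> pseudo_int B (A ` {\<beta>. lt r \<beta> \<alpha>})}"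

definition covered :: "'k rel \<Rightarrow> ('k \<Rightarrow> nat set) \<Rightarrow> (nat \<times> 'k) set \<Rightarrow> bool" where
  "covered r A P \<longleftrightarrow> (\<exists>F. finite F \<and> F \<subseteq> comps r A \<and> P \<subseteq> \<Union>F)"

definition good :: "'k rel \<Rightarrow> ('k \<Rightarrow> nat set) \<Rightarrow> (nat \<Rightarrow> nat \<times> 'k) \<Rightarrow> bool" where
  "good r A \<sigma> \<longleftrightarrow> (\<forall>c\<in>comps r A. finite {m. \<sigma> m \<in> c})"

lemma gens_eq: "tower_space r A = topology_generated_by ({{Some p}|p. True} \<union> (\<lambda>c. - (Some ` c)) ` comps r A)"
proof -
  have "({{Some p} | p. True}
      \<union> {- (Some ` ({n} \<times> UNIV)) | n. True}
      \<union> {- (Some ` (A \<alpha> \<times> {\<beta>. lt r \<beta> \<alpha>})) | \<alpha>. True}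
      \<union> {- (Some ` (B \<times> {\<beta>. lt r \<beta> \<alpha>})) | \<alpha> B.
            cf_gt_omega r \<alpha> \<and> pseudo_int B (A ` {\<beta>. lt r \<beta> \<alpha>})})
     = ({{Some p}|p. True} \<union> (\<lambda>c. - (Some ` c)) ` comps r A)"
  proof -
    have 1: "(\<lambda>c. - (Some ` c)) ` {{n} \<times> UNIV | n. True} = {- (Some ` ({n} \<times> UNIV)) | n. True}"
      by blast
    have 2: "(\<lambda>c. - (Some ` c)) ` {A \<alpha> \<times> {\<beta>. lt r \<beta> \<alpha>} | \<alpha>. True} = {- (Some ` (A \<alpha> \<times> {\<beta>. lt r \<beta> \<alpha>})) | \<alpha>. True}"
      by blast
    have 3: "(\<lambda>c. - (Some ` c)) ` {B \<times> {\<beta>. lt r \<beta> \<alpha>} | \<alpha> B. cf_gt_omega r \<alpha> \<and> pseudo_int B (A ` {\<beta>. lt r \<beta> \<alpha>})}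
       = {- (Some ` (B \<times> {\<beta>. lt r \<beta> \<alpha>})) | \<alpha> B.
            cf_gt_omega r \<alpha> \<and> pseudo_int B (A ` {\<beta>. lt r \<beta> \<alpha>})}"
      by blast
    show ?thesis unfolding comps_def image_Un 1 2 3 by (simp add: Un_assoc)
  qed
  then show ?thesis unfolding tower_space_def by simp
qed

lemma topX: "topspace (tower_space r A) = UNIV"
  unfolding gens_eq topology_generated_by_topspace
proof -
  have "None \<in> - (Some ` ({0} \<times> UNIV))" by simp
  moreover have "{0} \<times> UNIV \<in> comps r A" unfolding comps_def by blast
  ultimately have "None \<in> \<Union>((\<lambda>c. - (Some ` c)) ` comps r A)" by blast
  moreover have "Some p \<in> \<Union>{{Some p}|p. True}" for p by blast
  ultimately have "x \<in> \<Union>({{Some p}|p. True} \<union> (\<lambda>c. - (Some ` c)) ` comps r A)" for x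
    by (cases x) auto
  then show "\<Union>({{Some p}|p. True} \<union> (\<lambda>c. - (Some ` c)) ` comps r A) = UNIV"
    by blast
qed

lemma open_single: "openin (tower_space r A) {Some p}"
  unfolding gens_eq openin_topology_generated_by_iff
  by (rule generate_topology_on.Basis) blast

lemma open_comp: "c \<in> comps r A \<Longrightarrow> openin (tower_space r A) (- (Some ` c))"
  unfolding gens_eq openin_topology_generated_by_iff
  by (rule generate_topology_on.Basis) blast

lemma open_finite:
  assumes "finite F" "F \<subseteq> comps r A"
  shows "openin (tower_space r A) (- (Some ` \<Union>F))"
proof (cases "F = {}")
  case True
  then show ?thesis by (metis Compl_empty_eq Sup_empty image_empty openin_topspace topX)
next
  case False
  have eq: "- (Some ` \<Union>F) = \<Inter>((\<lambda>c. - (Some ` c)) ` F)" by blast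
  show ?thesis unfolding eq
    by (rule openin_Inter) (use assms False open_comp in auto)
qed

lemma nbhd_None:
  assumes "openin (tower_space r A) W" "None \<in> W"
  shows "\<exists>F. finite F \<and> F \<subseteq> comps r A \<and> - (Some ` \<Union>F) \<subseteq> W"
proof -
  have "generate_topology_on ({{Some p}|p. True} \<union> (\<lambda>c. - (Some ` c)) ` comps r A) W"
    using assms(1) unfolding gens_eq openin_topology_generated_by_iff .
  then show ?thesis using assms(2)
  proof (induction rule: generate_topology_on.induct)
    case Empty
    then show ?case by simp
  next
    case (Int a b)
    then have "None \<in> a" "None \<in> b" by auto
    then obtain F1 F2 where 1: "finite F1" "F1 \<subseteq> comps r A" "- (Some ` \<Union>F1) \<subseteq> a"
      and 2: "finite F2" "F2 \<subseteq> comps r A" "- (Some ` \<Union>F2) \<subseteq> b" using Int.IH by meson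
    have "- (Some ` \<Union>(F1 \<union> F2)) \<subseteq> - (Some ` \<Union>F1)" "- (Some ` \<Union>(F1 \<union> F2)) \<subseteq> - (Some ` \<Union>F2)"
      by auto
    then have "- (Some ` \<Union>(F1 \<union> F2)) \<subseteq> a \<inter> b" using 1(3) 2(3) by (meson Int_greatest subset_trans)
    moreover have "finite (F1 \<union> F2)" "F1 \<union> F2 \<subseteq> comps r A" using 1 2 by auto
    ultimately show ?case by (intro exI[of _ "F1 \<union> F2"] conjI)
  next
    case (UN K)
    then obtain k where k: "k \<in> K" "None \<in> k" by blast
    then obtain F where F: "finite F" "F \<subseteq> comps r A" "- (Some ` \<Union>F) \<subseteq> k" using UN.IH by meson
    have "k \<subseteq> \<Union>K" using k(1) by blast
    then show ?case using F by (intro exI[of _ F]) auto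
  next
    case (Basis s)
    have "s \<in> {{Some p}|p. True} \<or> s \<in> (\<lambda>c. - (Some ` c)) ` comps r A" using Basis.hyps by (rule UnE) simp_all
    moreover have "s \<notin> {{Some p}|p. True}" using Basis.prems by auto
    ultimately obtain c where "c \<in> comps r A" "s = - (Some ` c)" by auto
    then show ?case by (intro exI[of _ "{c}"]) auto
  qed
qed

lemma closure_uncovered:
  assumes "None \<in> tower_space r A closure_of (Some ` P)"
  shows "\<not> covered r A P"
proof
  assume "covered r A P"
  then obtain F where F: "finite F" "F \<subseteq> comps r A" "P \<subseteq> \<Union>F" unfolding covered_def by blast
  have "openin (tower_space r A) (- (Some ` \<Union>F))" using open_finite F by blast
  moreover have "None \<in> - (Some ` \<Union>F)" by auto
  moreover have "Some ` P \<inter> - (Some ` \<Union>F) = {}" using F(3) by auto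
  ultimately show False using assms unfolding in_closure_of by (metis disjoint_iff)
qed

lemma good_limit:
  assumes "good r A \<sigma>"
  shows "limitin (tower_space r A) (\<lambda>m. Some (\<sigma> m)) None sequentially"
  unfolding limitin_def
proof (intro conjI allI impI)
  show "None \<in> topspace (tower_space r A)" by (simp add: topX)
  fix U assume U: "openin (tower_space r A) U \<and> None \<in> U"
  obtain F where F: "finite F" "F \<subseteq> comps r A" "- (Some ` \<Union>F) \<subseteq> U"
    using nbhd_None[of r A U] U by meson
  have "\<forall>c\<in>F. eventually (\<lambda>m. \<sigma> m \<notin> c) sequentially"
  proof
    fix c assume "c \<in> F"
    then have "c \<in> comps r A" by (rule subsetD[OF F(2)])
    then have "finite {m. \<sigma> m \<in> c}" using assms unfolding good_def by simp
    then obtain N where N: "\<forall>m\<in>{m. \<sigma> m \<in> c}. m < N" using finite_nat_set_iff_bounded by meson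
    have "\<forall>m\<ge>N. \<sigma> m \<notin> c"
    proof (intro allI impI)
      fix m assume "N \<le> m"
      then show "\<sigma> m \<notin> c" using N by force
    qed
    then show "eventually (\<lambda>m. \<sigma> m \<notin> c) sequentially"
      unfolding eventually_sequentially by meson
  qed
  then have "eventually (\<lambda>m. \<forall>c\<in>F. \<sigma> m \<notin> c) sequentially"
    by (rule eventually_ball_finite[OF F(1)])
  moreover have "Some (\<sigma> m) \<in> U" if "\<forall>c\<in>F. \<sigma> m \<notin> c" for m
  proof -
    have "Some (\<sigma> m) \<in> - (Some ` \<Union>F)" using that by auto
    then show ?thesis by (rule subsetD[OF F(3)])
  qed
  ultimately show "eventually (\<lambda>m. Some (\<sigma> m) \<in> U) sequentially"
    by (rule eventually_mono)
qed

lemma covered_mono: "covered r A P \<Longrightarrow> Q \<subseteq> P \<Longrightarrow> covered r A Q"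
  unfolding covered_def by blast

lemma covered_Un: "covered r A P \<Longrightarrow> covered r A Q \<Longrightarrow> covered r A (P \<union> Q)"
proof -
  assume "covered r A P" "covered r A Q"
  then obtain F1 F2 where "finite F1" "F1 \<subseteq> comps r A" "P \<subseteq> \<Union>F1"
     "finite F2" "F2 \<subseteq> comps r A" "Q \<subseteq> \<Union>F2" unfolding covered_def by blast
  then show ?thesis unfolding covered_def by (intro exI[of _ "F1 \<union> F2"]) auto
qed

lemma covered_comp: "c \<in> comps r A \<Longrightarrow> covered r A c"
  unfolding covered_def by (intro exI[of _ "{c}"]) auto

lemma covered_cols: "finite K \<Longrightarrow> covered r A (K \<times> UNIV)"
  unfolding covered_def
  by (intro exI[of _ "(\<lambda>n. {n} \<times> UNIV) ` K"]) (auto simp: comps_def)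



context
  fixes r :: "'k rel" and A :: "'k \<Rightarrow> nat set"
  assumes W: "well_order_on UNIV r" and T: "tower r A"
begin

lemma good_crit:
  fixes k :: "nat \<Rightarrow> nat" and h :: "nat \<Rightarrow> 'k"
  assumes inj: "inj k" and kA: "\<forall>m. k m \<notin> A \<gamma>"
    and ev: "\<forall>\<alpha>. lt r \<alpha> \<gamma> \<longrightarrow> (\<exists>N. \<forall>m\<ge>N. (\<alpha>, h m) \<in> r)"
    and cf: "cf_gt_omega r \<gamma> \<longrightarrow> (\<forall>m. (\<gamma>, h m) \<in> r)"
  shows "good r A (\<lambda>m. (k m, h m))"
  unfolding good_def
proof
  fix c assume "c \<in> comps r A"
  have low: "finite {m. k m \<in> X \<and> lt r (h m) \<alpha>}" if lo: "lt r \<alpha> \<gamma>" for \<alpha> X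
  proof -
    obtain N where N: "\<forall>m\<ge>N. (\<alpha>, h m) \<in> r" using ev lo by blast
    have "{m. k m \<in> X \<and> lt r (h m) \<alpha>} \<subseteq> {..<N}"
    proof
      fix m assume "m \<in> {m. k m \<in> X \<and> lt r (h m) \<alpha>}"
      then have "\<not> (\<alpha>, h m) \<in> r" using not_lt[OF W] by blast
      then show "m \<in> {..<N}" using N by (meson lessThan_iff not_le)
    qed
    then show ?thesis using finite_subset by blast
  qed
  have high: "finite {m. k m \<in> X \<and> lt r (h m) \<alpha>}" if "finite (X - A \<gamma>)" for \<alpha> X
  proof -
    have "{m. k m \<in> X \<and> lt r (h m) \<alpha>} \<subseteq> {m. k m \<in> X - A \<gamma>}" using kA by auto
    moreover have "finite {m. k m \<in> X - A \<gamma>}" using finite_vimageI[OF that inj] by (simp add: vimage_def)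
    ultimately show ?thesis using finite_subset by blast
  qed
  consider (col) n where "c = {n} \<times> UNIV"
    | (tw) \<alpha> where "c = A \<alpha> \<times> {\<beta>. lt r \<beta> \<alpha>}"
    | (pi) \<alpha> B where "c = B \<times> {\<beta>. lt r \<beta> \<alpha>}" "cf_gt_omega r \<alpha>" "pseudo_int B (A ` {\<beta>. lt r \<beta> \<alpha>})"
    using \<open>c \<in> comps r A\<close> unfolding comps_def by blast
  then show "finite {m. (k m, h m) \<in> c}"
  proof cases
    case col
    have "{m. (k m, h m) \<in> c} = k -` {n}" using col by auto
    then show ?thesis using finite_vimageI[OF _ inj, of "{n}"] by simp
  next
    case tw
    have eq: "{m. (k m, h m) \<in> c} = {m. k m \<in> A \<alpha> \<and> lt r (h m) \<alpha>}" using tw by auto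
    consider "lt r \<alpha> \<gamma>" | "\<alpha> = \<gamma>" | "lt r \<gamma> \<alpha>" using lt_cases[OF W] by blast
    then show ?thesis
    proof cases
      case 1 then show ?thesis unfolding eq by (rule low)
    next
      case 2 then show ?thesis unfolding eq using kA by simp
    next
      case 3
      then have "finite (A \<alpha> - A \<gamma>)" using T unfolding tower_def by blast
      then show ?thesis unfolding eq by (rule high)
    qed
  next
    case pi
    have eq: "{m. (k m, h m) \<in> c} = {m. k m \<in> B \<and> lt r (h m) \<alpha>}" using pi by auto
    consider "lt r \<alpha> \<gamma>" | "\<alpha> = \<gamma>" | "lt r \<gamma> \<alpha>" using lt_cases[OF W] by blast
    then show ?thesis
    proof cases
      case 1 then show ?thesis unfolding eq by (rule low)
    next
      case 2
      then have "\<forall>m. \<not> lt r (h m) \<alpha>" using cf pi(2) not_lt[OF W] by blast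
      then show ?thesis unfolding eq by simp
    next
      case 3
      then have "A \<gamma> \<in> A ` {\<beta>. lt r \<beta> \<alpha>}" by blast
      then have "finite (B - A \<gamma>)" using pi(3) unfolding pseudo_int_def by blast
      then show ?thesis unfolding eq by (rule high)
    qed
  qed
qed

lemma seq_high:
  assumes "infinite {k. k \<notin> A \<beta> \<and> (\<exists>h. (k,h) \<in> P \<and> (\<beta>,h) \<in> r)}"
  shows "\<exists>\<sigma>. (\<forall>m. \<sigma> m \<in> P) \<and> good r A \<sigma>"
proof -
  define Q where "Q = {k. k \<notin> A \<beta> \<and> (\<exists>h. (k,h) \<in> P \<and> (\<beta>,h) \<in> r)}"
  have "\<exists>k::nat\<Rightarrow>nat. strict_mono k \<and> (\<forall>m. k m \<in> Q)"
    using inc_choice[of "\<lambda>_. Q"] assms Q_def by simp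
  then obtain k :: "nat \<Rightarrow> nat" where k: "strict_mono k" "\<forall>m. k m \<in> Q" by blast
  define h where "h m = (SOME h. (k m, h) \<in> P \<and> (\<beta>, h) \<in> r)" for m
  have h: "(k m, h m) \<in> P \<and> (\<beta>, h m) \<in> r" for m
    unfolding h_def using k(2) unfolding Q_def by (metis (mono_tags, lifting) mem_Collect_eq someI_ex)
  have "good r A (\<lambda>m. (k m, h m))"
  proof (rule good_crit)
    show "inj k" using k(1) strict_mono_imp_inj_on by blast
    show "\<forall>m. k m \<notin> A \<beta>" using k(2) unfolding Q_def by blast
    show "\<forall>\<alpha>. lt r \<alpha> \<beta> \<longrightarrow> (\<exists>N. \<forall>m\<ge>N. (\<alpha>, h m) \<in> r)"
      using h wo_trans[OF W] unfolding lt_def by blast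
    show "cf_gt_omega r \<beta> \<longrightarrow> (\<forall>m. (\<beta>, h m) \<in> r)" using h by blast
  qed
  then show ?thesis using h by (intro exI[of _ "\<lambda>m. (k m, h m)"]) auto
qed

lemma key_G:
  assumes G: "\<forall>C. C \<subseteq> G \<and> countable C \<longrightarrow> (\<exists>\<delta>\<in>G. \<forall>c\<in>C. lt r c \<delta>)"
    and noseq: "\<not> (\<exists>\<sigma>. (\<forall>m. \<sigma> m \<in> P) \<and> good r A \<sigma>)"
  shows "\<exists>U \<alpha>0. \<alpha>0 \<in> G \<and> (\<forall>\<beta>\<in>G. finite (U - A \<beta>)) \<and> P \<subseteq> (U \<times> UNIV) \<union> (UNIV \<times> {\<beta>. lt r \<beta> \<alpha>0})"
proof -
  define U where "U = {k. \<forall>\<alpha>\<in>G. \<exists>h. (k,h) \<in> P \<and> (\<alpha>,h) \<in> r}"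
  have fin: "finite (U - A \<beta>)" if "\<beta> \<in> G" for \<beta>
  proof -
    have "U - A \<beta> \<subseteq> {k. k \<notin> A \<beta> \<and> (\<exists>h. (k,h) \<in> P \<and> (\<beta>,h) \<in> r)}"
      using that unfolding U_def by blast
    moreover have "finite {k. k \<notin> A \<beta> \<and> (\<exists>h. (k,h) \<in> P \<and> (\<beta>,h) \<in> r)}"
      using seq_high noseq by blast
    ultimately show ?thesis using finite_subset by blast
  qed
  have nu: "\<exists>\<alpha>\<in>G. \<forall>h. (k,h) \<in> P \<longrightarrow> lt r h \<alpha>" if "k \<notin> U" for k
    using that not_lt[OF W] unfolding U_def by blast
  define a where "a k = (SOME \<alpha>. \<alpha> \<in> G \<and> (\<forall>h. (k,h) \<in> P \<longrightarrow> lt r h \<alpha>))" for k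
  have a: "a k \<in> G \<and> (\<forall>h. (k,h) \<in> P \<longrightarrow> lt r h (a k))" if "k \<notin> U" for k
    unfolding a_def using nu[OF that] by (rule someI2_bex) blast
  have "a ` (- U) \<subseteq> G" "countable (a ` (- U))" using a by auto
  then obtain \<delta> where \<delta>: "\<delta> \<in> G" "\<forall>c\<in>a ` (- U). lt r c \<delta>" using G by blast
  have "P \<subseteq> (U \<times> UNIV) \<union> (UNIV \<times> {\<beta>. lt r \<beta> \<delta>})"
  proof
    fix x assume "x \<in> P"
    obtain k h where x: "x = (k, h)" by fastforce
    show "x \<in> (U \<times> UNIV) \<union> (UNIV \<times> {\<beta>. lt r \<beta> \<delta>})"
    proof (cases "k \<in> U")
      case False
      then have "lt r h (a k)" using a \<open>x \<in> P\<close> x by blast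
      moreover have "lt r (a k) \<delta>" using \<delta>(2) False by blast
      ultimately show ?thesis using x lt_trans[OF W] by blast
    qed (use x in auto)
  qed
  then show ?thesis using fin \<delta>(1) by blast
qed

end


lemma covered_empty: "covered r A {}"
  unfolding covered_def by (intro exI[of _ "{}"]) auto

context
  fixes r :: "'k rel" and A :: "'k \<Rightarrow> nat set"
  assumes W: "well_order_on UNIV r" and T: "tower r A"
begin

lemma uncovered_seq:
  assumes unc: "\<not> covered r A P"
  shows "\<exists>\<sigma>. (\<forall>m. \<sigma> m \<in> P) \<and> good r A \<sigma>"
proof (rule ccontr)
  assume noseq: "\<not> ?thesis"
  have noseq': "\<not> (\<exists>\<sigma>. (\<forall>m. \<sigma> m \<in> P') \<and> good r A \<sigma>)" if "P' \<subseteq> P" for P'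
    using noseq that by blast
  have GU: "\<forall>C. C \<subseteq> UNIV \<and> countable C \<longrightarrow> (\<exists>\<delta>\<in>UNIV. \<forall>c\<in>C. lt r c \<delta>)"
    using countable_bound[OF W T] by blast
  obtain U \<alpha>0 where U: "\<forall>\<beta>\<in>UNIV. finite (U - A \<beta>)"
    and PU: "P \<subseteq> (U \<times> UNIV) \<union> (UNIV \<times> {\<beta>. lt r \<beta> \<alpha>0})"
    using key_G[OF W T GU noseq] by blast
  have "pseudo_int U (range A)" using U unfolding pseudo_int_def by blast
  then have "finite U" using T unfolding tower_def by blast
  then have cU: "covered r A (U \<times> UNIV)" by (rule covered_cols)
  have "\<not> covered r A (P \<inter> (UNIV \<times> {\<beta>. lt r \<beta> \<alpha>0}))"
  proof
    assume "covered r A (P \<inter> (UNIV \<times> {\<beta>. lt r \<beta> \<alpha>0}))"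
    then have "covered r A ((U \<times> UNIV) \<union> (P \<inter> (UNIV \<times> {\<beta>. lt r \<beta> \<alpha>0})))"
      using cU covered_Un by blast
    moreover have "P \<subseteq> (U \<times> UNIV) \<union> (P \<inter> (UNIV \<times> {\<beta>. lt r \<beta> \<alpha>0}))" using PU by blast
    ultimately show False using unc covered_mono by blast
  qed
  define Ga where "Ga = {\<gamma>. \<not> covered r A (P \<inter> (UNIV \<times> {\<beta>. lt r \<beta> \<gamma>}))}"
  have "Ga \<noteq> {}" using \<open>\<not> covered r A (P \<inter> (UNIV \<times> {\<beta>. lt r \<beta> \<alpha>0}))\<close> Ga_def by blast
  then obtain \<gamma> where \<gamma>: "\<gamma> \<in> Ga" "\<forall>x\<in>Ga. (\<gamma>, x) \<in> r" using wo_min[OF W] by blast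
  have lower: "covered r A (P \<inter> (UNIV \<times> {\<beta>. lt r \<beta> \<alpha>}))" if "lt r \<alpha> \<gamma>" for \<alpha>
  proof (rule ccontr)
    assume "\<not> ?thesis"
    then have "(\<gamma>, \<alpha>) \<in> r" using \<gamma>(2) Ga_def by blast
    then show False using that not_lt[OF W] by blast
  qed
  define P\<gamma> where "P\<gamma> = P \<inter> (UNIV \<times> {\<beta>. lt r \<beta> \<gamma>})"
  have uncg: "\<not> covered r A P\<gamma>" using \<gamma>(1) Ga_def P\<gamma>_def by blast
  show False
  proof (cases "cf_gt_omega r \<gamma>")
    case True
    have G: "\<forall>C. C \<subseteq> {\<beta>. lt r \<beta> \<gamma>} \<and> countable C \<longrightarrow> (\<exists>\<delta>\<in>{\<beta>. lt r \<beta> \<gamma>}. \<forall>c\<in>C. lt r c \<delta>)"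
      using True unfolding cf_gt_omega_def by blast
    obtain V \<alpha>1 where V: "\<alpha>1 \<in> {\<beta>. lt r \<beta> \<gamma>}" "\<forall>\<beta>\<in>{\<beta>. lt r \<beta> \<gamma>}. finite (V - A \<beta>)"
      and PV: "P\<gamma> \<subseteq> (V \<times> UNIV) \<union> (UNIV \<times> {\<beta>. lt r \<beta> \<alpha>1})"
      using key_G[OF W T G noseq'[of P\<gamma>]] P\<gamma>_def by blast
    have "pseudo_int V (A ` {\<beta>. lt r \<beta> \<gamma>})" using V(2) unfolding pseudo_int_def by blast
    then have "V \<times> {\<beta>. lt r \<beta> \<gamma>} \<in> comps r A" using True unfolding comps_def by blast
    then have c1: "covered r A (V \<times> {\<beta>. lt r \<beta> \<gamma>})" by (rule covered_comp)
    have c2: "covered r A (P \<inter> (UNIV \<times> {\<beta>. lt r \<beta> \<alpha>1}))" using lower V(1) by blast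
    have "P\<gamma> \<subseteq> (V \<times> {\<beta>. lt r \<beta> \<gamma>}) \<union> (P \<inter> (UNIV \<times> {\<beta>. lt r \<beta> \<alpha>1}))"
      using PV P\<gamma>_def by blast
    then show False using uncg covered_mono covered_Un[OF c1 c2] by blast
  next
    case False
    have ne: "{\<beta>. lt r \<beta> \<gamma>} \<noteq> {}"
    proof
      assume "{\<beta>. lt r \<beta> \<gamma>} = {}"
      then have "P\<gamma> = {}" unfolding P\<gamma>_def by blast
      then show False using uncg covered_empty by metis
    qed
    then have "\<exists>C. C \<subseteq> {\<beta>. lt r \<beta> \<gamma>} \<and> countable C \<and> (\<forall>\<delta>. lt r \<delta> \<gamma> \<longrightarrow> (\<exists>\<beta>\<in>C. \<not> lt r \<beta> \<delta>))"
      using False unfolding cf_gt_omega_def by auto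
    then obtain C where C: "C \<subseteq> {\<beta>. lt r \<beta> \<gamma>}" "countable C"
      and C3: "\<forall>\<delta>. lt r \<delta> \<gamma> \<longrightarrow> (\<exists>\<beta>\<in>C. \<not> lt r \<beta> \<delta>)" by blast
    have "\<forall>\<delta>. lt r \<delta> \<gamma> \<longrightarrow> (\<exists>c\<in>C. (\<delta>, c) \<in> r)"
      using C3 not_lt[OF W] by simp
    note C = C this
    have "C \<noteq> {}" using ne C(3) by blast
    define e where "e = from_nat_into C"
    have Ce: "range e = C" using range_from_nat_into[OF \<open>C \<noteq> {}\<close> C(2)] e_def by simp
    define c where "c m = (SOME M. M \<in> e ` {..m} \<and> (\<forall>i\<le>m. (e i, M) \<in> r))" for m
    have c: "c m \<in> e ` {..m} \<and> (\<forall>i\<le>m. (e i, c m) \<in> r)" for m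
      unfolding c_def using finite_upper[OF W, of e m] by (rule someI_ex)
    have cC: "lt r (c m) \<gamma>" for m using c[of m] Ce C(1) by blast
    define R where "R m = P\<gamma> - (UNIV \<times> {\<beta>. lt r \<beta> (c m)})" for m
    have Runc: "\<not> covered r A (R m)" for m
    proof
      assume "covered r A (R m)"
      moreover have "covered r A (P \<inter> (UNIV \<times> {\<beta>. lt r \<beta> (c m)}))" using lower cC by blast
      moreover have "P\<gamma> \<subseteq> R m \<union> (P \<inter> (UNIV \<times> {\<beta>. lt r \<beta> (c m)}))"
        unfolding R_def P\<gamma>_def by blast
      ultimately show False using uncg covered_mono covered_Un by metis
    qed
    define Q where "Q m = {k. k \<notin> A \<gamma> \<and> (\<exists>h. (k,h) \<in> R m)}" for m
    have Qinf: "infinite (Q m)" for m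
    proof
      assume fin: "finite (Q m)"
      have "A \<gamma> \<times> {\<beta>. lt r \<beta> \<gamma>} \<in> comps r A" unfolding comps_def by blast
      then have "covered r A ((A \<gamma> \<times> {\<beta>. lt r \<beta> \<gamma>}) \<union> (Q m \<times> UNIV))"
        by (intro covered_Un covered_comp covered_cols[OF fin])
      moreover have "R m \<subseteq> (A \<gamma> \<times> {\<beta>. lt r \<beta> \<gamma>}) \<union> (Q m \<times> UNIV)"
        unfolding R_def P\<gamma>_def Q_def by blast
      ultimately show False using Runc covered_mono by blast
    qed
    obtain k :: "nat \<Rightarrow> nat" where k: "strict_mono k" "\<forall>m. k m \<in> Q m"
      using inc_choice[of Q] Qinf by blast
    define h where "h m = (SOME h. (k m, h) \<in> R m)" for m
    have h: "(k m, h m) \<in> R m" for m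
      unfolding h_def using k(2) Q_def by (metis (mono_tags, lifting) mem_Collect_eq someI_ex)
    have "good r A (\<lambda>m. (k m, h m))"
    proof (rule good_crit[OF W T])
      show "inj k" using k(1) strict_mono_imp_inj_on by blast
      show "\<forall>m. k m \<notin> A \<gamma>" using k(2) Q_def by blast
      show "cf_gt_omega r \<gamma> \<longrightarrow> (\<forall>m. (\<gamma>, h m) \<in> r)" using False by blast
      show "\<forall>\<alpha>. lt r \<alpha> \<gamma> \<longrightarrow> (\<exists>N. \<forall>m\<ge>N. (\<alpha>, h m) \<in> r)"
      proof (intro allI impI)
        fix \<alpha> assume "lt r \<alpha> \<gamma>"
        then obtain x where x: "x \<in> C" "(\<alpha>, x) \<in> r" using C(3) by blast
        then obtain i where i: "x = e i" using Ce by blast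
        have "(\<alpha>, h m) \<in> r" if "i \<le> m" for m
        proof -
          have "(e i, c m) \<in> r" using c that by blast
          moreover have "(c m, h m) \<in> r" using h[of m] not_lt[OF W] unfolding R_def by blast
          ultimately show ?thesis using x(2) i wo_trans[OF W] by blast
        qed
        then show "\<exists>N. \<forall>m\<ge>N. (\<alpha>, h m) \<in> r" by blast
      qed
    qed
    moreover have "\<forall>m. (k m, h m) \<in> P" using h unfolding R_def P\<gamma>_def by blast
    ultimately have "(\<forall>m. (\<lambda>m. (k m, h m)) m \<in> P) \<and> good r A (\<lambda>m. (k m, h m))" by simp
    then have "\<exists>\<sigma>. (\<forall>m. \<sigma> m \<in> P) \<and> good r A \<sigma>" by (intro exI[of _ "\<lambda>m. (k m, h m)"])
    then show False using noseq by (rule notE[rotated])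
  qed
qed

end


context
  fixes r :: "'k rel" and A :: "'k \<Rightarrow> nat set"
  assumes W: "well_order_on UNIV r" and T: "tower r A"
begin

lemma frechet: "frechet_space (tower_space r A)"
  unfolding frechet_space_def
proof (intro allI impI)
  fix S x assume asm: "S \<subseteq> topspace (tower_space r A) \<and> x \<in> tower_space r A closure_of S"
  show "\<exists>\<sigma>. (\<forall>n. \<sigma> n \<in> S) \<and> limitin (tower_space r A) \<sigma> x sequentially"
  proof (cases "x \<in> S")
    case True
    then show ?thesis by (intro exI[of _ "\<lambda>n. x"]) (simp add: topX)
  next
    case False
    show ?thesis
    proof (cases x)
      case (Some p)
      have "openin (tower_space r A) {Some p}" by (rule open_single)
      then have "S \<inter> {Some p} \<noteq> {}" using asm Some unfolding in_closure_of by blast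
      then have "x \<in> S" using Some by blast
      then show ?thesis using False by contradiction
    next
      case None
      define P where "P = {p. Some p \<in> S}"
      have SP: "S = Some ` P"
      proof
        show "Some ` P \<subseteq> S" unfolding P_def by blast
        show "S \<subseteq> Some ` P"
        proof
          fix y assume "y \<in> S"
          then obtain q where "y = Some q" using False None by (cases y) auto
          then show "y \<in> Some ` P" using \<open>y \<in> S\<close> unfolding P_def by blast
        qed
      qed
      have "None \<in> tower_space r A closure_of (Some ` P)" using asm None SP by simp
      then have "\<not> covered r A P" by (rule closure_uncovered)
      then obtain \<sigma> where \<sigma>: "\<forall>m. \<sigma> m \<in> P" "good r A \<sigma>" using uncovered_seq[OF W T] by blast
      have "limitin (tower_space r A) (\<lambda>m. Some (\<sigma> m)) None sequentially"
        by (rule good_limit[OF \<sigma>(2)])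
      moreover have "\<forall>n. Some (\<sigma> n) \<in> S" using \<sigma>(1) P_def by blast
      ultimately show ?thesis using None by (intro exI[of _ "\<lambda>m. Some (\<sigma> m)"]) simp
    qed
  qed
qed

lemma comp_shape:
  assumes "c \<in> comps r A"
  shows "\<exists>N \<alpha>. \<forall>m h. (m, h) \<in> c \<longrightarrow> m \<le> N \<or> lt r h \<alpha>"
proof -
  consider (col) n where "c = {n} \<times> UNIV" | (other) \<alpha> D where "c = D \<times> {\<beta>. lt r \<beta> \<alpha>}"
    using assms unfolding comps_def by blast
  then show ?thesis
  proof cases
    case col
    then show ?thesis by auto
  next
    case other
    then show ?thesis by blast
  qed
qed

lemma avoid:
  assumes "finite F" "F \<subseteq> comps r A"
  shows "\<exists>N h0. \<forall>m>N. (m, h0) \<notin> \<Union>F"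
proof -
  define Nf where "Nf (c::(nat \<times> 'k) set) = (SOME N::nat. \<exists>\<alpha>. \<forall>m h. (m, h) \<in> c \<longrightarrow> m \<le> N \<or> lt r h \<alpha>)" for c
  define af where "af c = (SOME \<alpha>. \<forall>m h. (m, h) \<in> c \<longrightarrow> m \<le> Nf c \<or> lt r h \<alpha>)" for c
  have prc: "\<forall>m h. (m, h) \<in> c \<longrightarrow> m \<le> Nf c \<or> lt r h (af c)" if "c \<in> F" for c
  proof -
    have "\<exists>N \<alpha>. \<forall>m h. (m, h) \<in> c \<longrightarrow> m \<le> N \<or> lt r h \<alpha>" using comp_shape[OF subsetD[OF assms(2) that]] .
    then have "\<exists>\<alpha>. \<forall>m h. (m, h) \<in> c \<longrightarrow> m \<le> Nf c \<or> lt r h \<alpha>" unfolding Nf_def by (rule someI_ex)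
    then show ?thesis unfolding af_def by (rule someI_ex)
  qed
  obtain N where N: "\<forall>x\<in>Nf ` F. x \<le> N" using finite_nat_set_iff_bounded_le assms(1) by blast
  obtain h0 where h0: "\<forall>c\<in>af ` F. lt r c h0" using countable_bound[OF W T, of "af ` F"] assms(1)
    by (meson countable_finite finite_imageI)
  have "(m, h0) \<notin> \<Union>F" if "m > N" for m
  proof
    assume "(m, h0) \<in> \<Union>F"
    then obtain c where c: "c \<in> F" "(m, h0) \<in> c" by blast
    then have "m \<le> Nf c \<or> lt r h0 (af c)" using prc by blast
    moreover have "Nf c \<le> N" using N c(1) by blast
    moreover have "lt r (af c) h0" using h0 c(1) by blast
    ultimately have "lt r h0 (af c)" using that by linarith
    then have "lt r h0 h0" using \<open>lt r (af c) h0\<close> lt_trans[OF W] by blast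
    then show False unfolding lt_def by simp
  qed
  then show ?thesis by blast
qed

lemma not_L_selective: "\<not> L_selective (tower_space r A)"
proof
  let ?X = "tower_space r A"
  define \<phi> where "\<phi> y = (case y of enat n \<Rightarrow> Some ` ({n} \<times> (UNIV::'k set)) | \<infinity> \<Rightarrow> {None})" for y
  have \<phi>n: "\<phi> (enat n) = Some ` ({n} \<times> UNIV)" for n unfolding \<phi>_def by simp
  have \<phi>i: "\<phi> \<infinity> = {None}" unfolding \<phi>_def by simp
  have lsc: "lsc_closed (euclidean :: enat topology) ?X \<phi>"
    unfolding lsc_closed_def
  proof (intro conjI ballI allI impI)
    fix y :: enat
    show "\<phi> y \<noteq> {}" by (cases y) (auto simp: \<phi>n \<phi>i)
    show "closedin ?X (\<phi> y)"
    proof (cases y)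
      case (enat n)
      have "{n} \<times> UNIV \<in> comps r A" unfolding comps_def by blast
      then have "openin ?X (- (Some ` ({n} \<times> UNIV)))" by (rule open_comp)
      then show ?thesis unfolding closedin_def enat \<phi>n topX by (simp add: Compl_eq_Diff_UNIV)
    next
      case infinity
      have "(UNIV :: (nat \<times> 'k) option set) - {None} = \<Union>((\<lambda>p. {Some p}) ` UNIV)"
      proof (rule set_eqI)
        fix x :: "(nat \<times> 'k) option"
        show "x \<in> UNIV - {None} \<longleftrightarrow> x \<in> \<Union>((\<lambda>p. {Some p}) ` UNIV)" by (cases x) auto
      qed
      moreover have "openin ?X (\<Union>((\<lambda>p. {Some p}) ` UNIV))"
        by (rule openin_Union) (auto intro: open_single)
      ultimately show ?thesis unfolding closedin_def infinity \<phi>i topX by simp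
    qed
  next
    fix Wo assume Wo: "openin ?X Wo"
    have "open {y. \<phi> y \<inter> Wo \<noteq> {}}"
      unfolding open_enat_iff
    proof
      assume "\<infinity> \<in> {y. \<phi> y \<inter> Wo \<noteq> {}}"
      then have "None \<in> Wo" using \<phi>i by simp
      then obtain F where F: "finite F" "F \<subseteq> comps r A" "- (Some ` \<Union>F) \<subseteq> Wo"
        using nbhd_None Wo by metis
      obtain N h0 where Nh: "\<forall>m>N. (m, h0) \<notin> \<Union>F" using avoid[OF F(1,2)] by blast
      have "{enat N<..} \<subseteq> {y. \<phi> y \<inter> Wo \<noteq> {}}"
      proof
        fix y assume y: "y \<in> {enat N<..}"
        show "y \<in> {y. \<phi> y \<inter> Wo \<noteq> {}}"
        proof (cases y)
          case (enat m)
          then have "m > N" using y by simp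
          then have "Some (m, h0) \<in> - (Some ` \<Union>F)" using Nh by auto
          then have "Some (m, h0) \<in> Wo" by (rule subsetD[OF F(3)])
          moreover have "Some (m, h0) \<in> \<phi> y" using enat \<phi>n by simp
          ultimately show ?thesis by blast
        next
          case infinity
          then show ?thesis using \<open>None \<in> Wo\<close> \<phi>i by simp
        qed
      qed
      then show "\<exists>n::nat. {n <..} \<subseteq> {y. \<phi> y \<inter> Wo \<noteq> {}}" by blast
    qed
    then show "openin euclidean {y \<in> topspace euclidean. \<phi> y \<inter> Wo \<noteq> {}}"
      by simp
  qed
  assume "L_selective ?X"
  then have "\<exists>s. continuous_map (euclidean :: enat topology) ?X s \<and> (\<forall>y. s y \<in> \<phi> y)"
    using lsc unfolding L_selective_def by (elim allE impE)
  then obtain s where s: "continuous_map (euclidean :: enat topology) ?X s" "\<forall>y. s y \<in> \<phi> y"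
    by (elim exE conjE)
  have "s \<infinity> \<in> \<phi> \<infinity>" using s(2) by blast
  then have sinf: "s \<infinity> = None" by (simp add: \<phi>i)
  define g where "g n = snd (the (s (enat n)))" for n
  have sn: "s (enat n) = Some (n, g n)" for n
  proof -
    have "s (enat n) \<in> \<phi> (enat n)" using s(2) by blast
    then have "s (enat n) \<in> Some ` ({n} \<times> UNIV)" by (simp add: \<phi>n)
    then obtain h where "s (enat n) = Some (n, h)" by blast
    then show ?thesis by (simp add: g_def)
  qed
  have "countable (range g)" by simp
  then obtain \<delta> where \<delta>: "\<forall>c\<in>range g. lt r c \<delta>" using countable_bound[OF W T] by blast
  define Z where "Z = A \<delta> \<times> {\<beta>. lt r \<beta> \<delta>}"
  have "Z \<in> comps r A" unfolding comps_def Z_def by blast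
  then have U: "openin ?X (- (Some ` Z))" by (rule open_comp)
  from s(1) have "\<forall>U. openin ?X U \<longrightarrow> openin euclidean {x \<in> topspace euclidean. s x \<in> U}"
    unfolding continuous_map_def by (rule conjunct2)
  then have "openin euclidean {x \<in> topspace euclidean. s x \<in> - (Some ` Z)}" using U by (simp only: all_simps)
  then have op: "open {x. s x \<in> - (Some ` Z)}" by simp
  have "None \<notin> Some ` Z" by blast
  then have "\<infinity> \<in> {x. s x \<in> - (Some ` Z)}" using sinf by simp
  then have "\<exists>n::nat. {n <..} \<subseteq> {x. s x \<in> - (Some ` Z)}" using op unfolding open_enat_iff by (rule rev_mp)
  then obtain N :: nat where N: "{enat N <..} \<subseteq> {x. s x \<in> - (Some ` Z)}" by blast
  have "\<forall>m. \<exists>n>m. n \<in> A \<delta>" using A_inf[OF W T, of \<delta>] by (simp add: infinite_nat_iff_unbounded)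
  then obtain m where m: "m > N" "m \<in> A \<delta>" by blast
  have "enat m \<in> {enat N <..}" using m(1) by simp
  then have "enat m \<in> {x. s x \<in> - (Some ` Z)}" by (rule subsetD[OF N])
  then have n1: "Some (m, g m) \<notin> Some ` Z" using sn by simp
  have "lt r (g m) \<delta>" using \<delta> by blast
  then have "(m, g m) \<in> Z" using m(2) unfolding Z_def by simp
  then show False using n1 by blast
qed

end


context
  fixes r :: "'k rel" and A :: "'k \<Rightarrow> nat set"
  assumes W: "well_order_on UNIV r" and T: "tower r A"
begin

lemma cfc_None:
  fixes S :: "(nat \<times> 'k) option set"
  assumes cS: "countable S" and NS: "None \<in> S"
  shows "\<exists>\<B>. countable \<B> \<and> (\<forall>V\<in>\<B>. openin (subtopology (tower_space r A) S) V) \<and>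
    (\<forall>U. openin (subtopology (tower_space r A) S) U \<and> None \<in> U \<longrightarrow> (\<exists>V\<in>\<B>. None \<in> V \<and> V \<subseteq> U))"
proof -
  let ?X = "tower_space r A"
  define P where "P = {p. Some p \<in> S}"
  have "P \<subseteq> the ` S" unfolding P_def by (auto intro: image_eqI[where x="Some _"])
  then have cP: "countable P" using cS by (meson countable_image countable_subset)
  define H where "H = snd ` P"
  have cH: "countable H" unfolding H_def using cP by simp
  define seg where "seg a = {h \<in> H. lt r h a}" for a
  define f where "f I = (SOME b. seg b = I \<and> (\<forall>b'. seg b' = I \<longrightarrow> (b, b') \<in> r))" for I
  define sf where "sf a = f (seg a)" for a
  have sfp: "seg (sf a) = seg a \<and> (\<forall>b'. seg b' = seg a \<longrightarrow> (sf a, b') \<in> r)" for a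
  proof -
    have "{b. seg b = seg a} \<noteq> {}" by blast
    then obtain m where m: "m \<in> {b. seg b = seg a}" "\<forall>x\<in>{b. seg b = seg a}. (m, x) \<in> r"
      using wo_min[OF W] by meson
    then have "\<exists>b. seg b = seg a \<and> (\<forall>b'. seg b' = seg a \<longrightarrow> (b, b') \<in> r)" by blast
    then show ?thesis unfolding sf_def f_def by (rule someI_ex)
  qed
  have sf1: "seg (sf a) = seg a" for a using sfp by blast
  have sf2: "(sf a, a) \<in> r" for a using sfp by blast
  have sf3: "seg b = seg a \<Longrightarrow> (sf a, b) \<in> r" for a b using sfp by blast
  have segs: "seg a \<in> insert H (seg ` H)" for a
  proof (cases "\<forall>h\<in>H. lt r h a")
    case True
    then have "seg a = H" unfolding seg_def by blast
    then show ?thesis by blast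
  next
    case False
    then have "{h \<in> H. \<not> lt r h a} \<noteq> {}" by blast
    then obtain h0 where h0: "h0 \<in> {h \<in> H. \<not> lt r h a}" "\<forall>x\<in>{h \<in> H. \<not> lt r h a}. (h0, x) \<in> r"
      using wo_min[OF W] by meson
    have "seg a = seg h0"
    proof (rule set_eqI)
      fix h
      show "h \<in> seg a \<longleftrightarrow> h \<in> seg h0"
      proof
        assume "h \<in> seg a"
        then have "h \<in> H" "lt r h a" unfolding seg_def by auto
        moreover have "(a, h0) \<in> r" using h0(1) not_lt[OF W] by blast
        ultimately show "h \<in> seg h0" unfolding seg_def using lt_le_trans[OF W] by blast
      next
        assume "h \<in> seg h0"
        then have hh: "h \<in> H" "lt r h h0" unfolding seg_def by auto
        show "h \<in> seg a"
        proof (rule ccontr)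
          assume "h \<notin> seg a"
          then have "\<not> lt r h a" using hh(1) unfolding seg_def by blast
          then have "(h0, h) \<in> r" using h0(2) hh(1) by blast
          then show False using hh(2) not_lt[OF W] by blast
        qed
      qed
    qed
    then show ?thesis using h0(1) by blast
  qed
  have "range sf \<subseteq> f ` (insert H (seg ` H))" unfolding sf_def using segs by blast
  moreover have "countable (f ` (insert H (seg ` H)))" using cH by simp
  ultimately have cSig: "countable (range sf)" using countable_subset by blast
  define CS where "CS = range (\<lambda>n. {n} \<times> (UNIV :: 'k set)) \<union> (\<lambda>s. A s \<times> {\<beta>. lt r \<beta> s}) ` range sf"
  have cCS: "countable CS" unfolding CS_def using cSig by simp
  have CSc: "CS \<subseteq> comps r A" unfolding CS_def comps_def by blast
  have gen: "\<exists>F'. finite F' \<and> F' \<subseteq> CS \<and> (D \<times> {\<beta>. lt r \<beta> a}) \<inter> P \<subseteq> \<Union>F'"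
    if fin: "finite (D - A (sf a))" for D a
  proof -
    define F' where "F' = insert (A (sf a) \<times> {\<beta>. lt r \<beta> (sf a)}) ((\<lambda>n. {n} \<times> (UNIV :: 'k set)) ` (D - A (sf a)))"
    have "finite F'" unfolding F'_def using fin by simp
    moreover have "F' \<subseteq> CS" unfolding F'_def CS_def by blast
    moreover have "(D \<times> {\<beta>. lt r \<beta> a}) \<inter> P \<subseteq> \<Union>F'"
    proof
      fix q assume q: "q \<in> (D \<times> {\<beta>. lt r \<beta> a}) \<inter> P"
      obtain k h where kh: "q = (k, h)" by fastforce
      have "h \<in> H" using q kh unfolding H_def by force
      moreover have "lt r h a" using q kh by blast
      ultimately have "h \<in> seg a" unfolding seg_def by blast
      then have "h \<in> seg (sf a)" using sf1 by simp
      then have lh: "lt r h (sf a)" unfolding seg_def by blast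
      show "q \<in> \<Union>F'"
      proof (cases "k \<in> A (sf a)")
        case True
        then have "q \<in> A (sf a) \<times> {\<beta>. lt r \<beta> (sf a)}" using kh lh by blast
        then show ?thesis unfolding F'_def by blast
      next
        case False
        then have "k \<in> D - A (sf a)" using q kh by blast
        then have "{k} \<times> (UNIV :: 'k set) \<in> F'" unfolding F'_def by blast
        then show ?thesis using kh by blast
      qed
    qed
    ultimately show ?thesis by blast
  qed
  have cov: "\<exists>F'. finite F' \<and> F' \<subseteq> CS \<and> c \<inter> P \<subseteq> \<Union>F'" if cc: "c \<in> comps r A" for c
  proof -
    consider (col) n where "c = {n} \<times> UNIV"
      | (tw) a where "c = A a \<times> {\<beta>. lt r \<beta> a}"
      | (pi) a B where "c = B \<times> {\<beta>. lt r \<beta> a}" "cf_gt_omega r a" "pseudo_int B (A ` {\<beta>. lt r \<beta> a})"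
      using cc unfolding comps_def by blast
    then show ?thesis
    proof cases
      case col
      then have "c \<in> CS" unfolding CS_def by blast
      then show ?thesis by (intro exI[of _ "{c}"]) auto
    next
      case tw
      have "finite (A a - A (sf a))" using tower_le[OF W T] sf2 by blast
      then show ?thesis using gen tw by blast
    next
      case pi
      have "seg a \<subseteq> {\<beta>. lt r \<beta> a}" "countable (seg a)"
        unfolding seg_def using cH countable_subset[of _ H] by auto
      then obtain g where g: "lt r g a" "\<forall>\<beta>\<in>seg a. lt r \<beta> g"
        using pi(2) unfolding cf_gt_omega_def by blast
      have "seg g = seg a"
        unfolding seg_def using g lt_trans[OF W] seg_def by blast
      then have "(sf a, g) \<in> r" using sf3 by blast
      then have "lt r (sf a) a" using g(1) le_lt_trans[OF W] by blast
      then have "A (sf a) \<in> A ` {\<beta>. lt r \<beta> a}" by blast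
      then have "finite (B - A (sf a))" using pi(3) unfolding pseudo_int_def by blast
      then show ?thesis using gen pi(1) by blast
    qed
  qed
  define BB where "BB = (\<lambda>F. - (Some ` \<Union>F) \<inter> S) ` {F. finite F \<and> F \<subseteq> CS}"
  have "countable BB" unfolding BB_def using countable_Collect_finite_subset[OF cCS] by simp
  moreover have "\<forall>V\<in>BB. openin (subtopology ?X S) V"
  proof
    fix V assume "V \<in> BB"
    then obtain F where F: "finite F" "F \<subseteq> CS" "V = - (Some ` \<Union>F) \<inter> S" unfolding BB_def by blast
    have "openin ?X (- (Some ` \<Union>F))" using open_finite F(1) F(2) CSc by blast
    then show "openin (subtopology ?X S) V" unfolding openin_subtopology F(3) by blast
  qed
  moreover have "\<forall>U. openin (subtopology ?X S) U \<and> None \<in> U \<longrightarrow> (\<exists>V\<in>BB. None \<in> V \<and> V \<subseteq> U)"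
  proof (intro allI impI)
    fix U assume U: "openin (subtopology ?X S) U \<and> None \<in> U"
    then obtain T0 where T0: "openin ?X T0" "U = T0 \<inter> S" unfolding openin_subtopology by blast
    have "None \<in> T0" using U T0(2) by blast
    then obtain F0 where F0: "finite F0" "F0 \<subseteq> comps r A" "- (Some ` \<Union>F0) \<subseteq> T0"
      using nbhd_None[OF T0(1)] by blast
    define G where "G c = (SOME F'. finite F' \<and> F' \<subseteq> CS \<and> c \<inter> P \<subseteq> \<Union>F')" for c
    have G: "finite (G c) \<and> G c \<subseteq> CS \<and> c \<inter> P \<subseteq> \<Union>(G c)" if "c \<in> F0" for c
    proof -
      have "\<exists>F'. finite F' \<and> F' \<subseteq> CS \<and> c \<inter> P \<subseteq> \<Union>F'" using cov[OF subsetD[OF F0(2) that]] .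
      then show ?thesis unfolding G_def by (rule someI_ex)
    qed
    define F' where "F' = \<Union>(G ` F0)"
    have fF': "finite F'" "F' \<subseteq> CS"
    proof -
      show "finite F'" unfolding F'_def
      proof (rule finite_Union)
        show "finite (G ` F0)" using F0(1) by (rule finite_imageI)
        show "\<And>M. M \<in> G ` F0 \<Longrightarrow> finite M" using G by blast
      qed
      show "F' \<subseteq> CS" unfolding F'_def using G by blast
    qed
    have sub: "- (Some ` \<Union>F') \<inter> S \<subseteq> U"
    proof
      fix y assume y: "y \<in> - (Some ` \<Union>F') \<inter> S"
      have "y \<in> T0"
      proof (cases y)
        case None
        then show ?thesis using F0(3) by blast
      next
        case (Some q)
        have "q \<notin> \<Union>F0"
        proof
          assume "q \<in> \<Union>F0"
          then obtain c where c: "c \<in> F0" "q \<in> c" by blast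
          have "q \<in> P" using y Some unfolding P_def by blast
          then have "q \<in> \<Union>(G c)" using G[OF c(1)] c(2) by blast
          then have "q \<in> \<Union>F'" unfolding F'_def using c(1) by blast
          then show False using y Some by blast
        qed
        then have "y \<in> - (Some ` \<Union>F0)" using Some by blast
        then show ?thesis using F0(3) by blast
      qed
      then show "y \<in> U" using y T0(2) by blast
    qed
    have mem: "- (Some ` \<Union>F') \<inter> S \<in> BB" unfolding BB_def
      by (rule image_eqI[where x=F']) (use fF' in auto)
    have "None \<in> - (Some ` \<Union>F') \<inter> S" using NS by simp
    then show "\<exists>V\<in>BB. None \<in> V \<and> V \<subseteq> U" using sub by (intro bexI[OF _ mem]) simp
  qed
  ultimately show ?thesis by blast
qed

lemma cfc: "CFC (tower_space r A)"
  unfolding CFC_def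
proof (intro allI impI)
  fix S assume S: "S \<subseteq> topspace (tower_space r A) \<and> countable S"
  show "first_countable (subtopology (tower_space r A) S)"
    unfolding first_countable_def
  proof
    fix x assume "x \<in> topspace (subtopology (tower_space r A) S)"
    then have xS: "x \<in> S" by simp
    show "\<exists>\<B>. countable \<B> \<and> (\<forall>V\<in>\<B>. openin (subtopology (tower_space r A) S) V) \<and>
      (\<forall>U. openin (subtopology (tower_space r A) S) U \<and> x \<in> U \<longrightarrow> (\<exists>V\<in>\<B>. x \<in> V \<and> V \<subseteq> U))"
    proof (cases x)
      case None
      then show ?thesis using cfc_None S xS by blast
    next
      case (Some p)
      have "openin (subtopology (tower_space r A) S) {Some p}"
        unfolding openin_subtopology using open_single xS Some by blast
      then show ?thesis using Some by (intro exI[of _ "{{Some p}}"]) auto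
    qed
  qed
qed

end

theorem mainTheorem9:
  fixes r :: "'k rel" and A :: "'k \<Rightarrow> nat set"
  assumes "is_p_ordinal r"
    and "tower r A"
  shows "CFC (tower_space r A) \<and> frechet_space (tower_space r A) \<and>
         \<not> L_selective (tower_space r A)"
proof -
  have W: "well_order_on UNIV r"
    using assms(1) unfolding is_p_ordinal_def using card_order_on_well_order_on by blast
  show ?thesis using cfc[OF W assms(2)] frechet[OF W assms(2)] not_L_selective[OF W assms(2)] by blast
qed

end
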